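(* Let $b\ge 2$ and $n\ge 0$ be integers. If $x\in T_b(n)$ and $x\not\equiv 0 \pmod{s_0}$, then $x-(b-1)\in T_b(n)$.
   Context: For integers $b\ge 2$, $n\ge 0$, $i\ge0$ put $s_i=(b+1)b^{n+i}-1$ and $T_b(n)=\langle\{s_i:i\in\mathbb{N}\}\rangle$, the submonoid of $(\mathbb{N},+)$ generated by the $s_i$ (equivalently, by $s_0,\dots,s_{n+1}$). *)

theory Defs
  imports Main
begin

definition s :: "nat \<Rightarrow> nat \<Rightarrow> nat \<Rightarrow> nat" where
  "s b n i = (b + 1) * b ^ (n + i) - 1"

inductive_set nat_monoid_gen :: "nat set \<Rightarrow> nat set" for A :: "nat set" where
  zero: "0 \<in> nat_monoid_gen A"
| add: "a \<in> A \<Longrightarrow> y \<in> nat_monoid_gen A \<Longrightarrow> a + y \<in> nat_monoid_gen A"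

definition T :: "nat \<Rightarrow> nat \<Rightarrow> nat set" where
  "T b n = nat_monoid_gen (range (s b n))"

end

theory Submission
  imports Defs
begin

lemma gen_mult: "a \<in> A \<Longrightarrow> y \<in> nat_monoid_gen A \<Longrightarrow> k * a + y \<in> nat_monoid_gen A"
proof (induction k)
  case 0 then show ?case by simp
next
  case (Suc k)
  have "Suc k * a + y = a + (k * a + y)" by simp
  then show ?case using Suc nat_monoid_gen.add by metis
qed

lemma s_Suc:
  assumes "b \<ge> 2"
  shows "s b n (Suc j) = b * s b n j + (b - 1)"
proof -
  define c where "c = (b + 1) * b ^ (n + j)"
  have c1: "c \<ge> 1" using assms by (simp add: c_def Suc_le_eq)
  have "s b n (Suc j) = b * c - 1" by (simp add: s_def c_def algebra_simps)
  moreover have "s b n j = c - 1" by (simp add: s_def c_def)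
  moreover have "b * c - 1 = b * (c - 1) + (b - 1)"
  proof -
    obtain d where "c = Suc d" using c1 by (cases c) auto
    then show ?thesis using assms by (simp add: algebra_simps)
  qed
  ultimately show ?thesis by simp
qed

lemma main_aux:
  assumes b: "b \<ge> 2" and x: "x \<in> nat_monoid_gen (range (s b n))"
  shows "s b n 0 dvd x \<or> (x \<ge> b - 1 \<and> x - (b - 1) \<in> nat_monoid_gen (range (s b n)))"
  using x
proof (induction x rule: nat_monoid_gen.induct)
  case zero then show ?case by simp
next
  case (add a y)
  then obtain i where a: "a = s b n i" by auto
  show ?case
  proof (cases i)
    case 0
    show ?thesis
    proof (cases "s b n 0 dvd y")
      case True then show ?thesis using a 0 by simp
    next
      case False
      with add.IH have h: "y \<ge> b - 1" "y - (b - 1) \<in> nat_monoid_gen (range (s b n))" by auto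
      have "a + y - (b - 1) = a + (y - (b - 1))" using h by simp
      moreover have "a + (y - (b - 1)) \<in> nat_monoid_gen (range (s b n))"
        using h add.hyps(1) nat_monoid_gen.add by blast
      ultimately show ?thesis using h by simp
    qed
  next
    case (Suc j)
    have as: "a = b * s b n j + (b - 1)" using a Suc s_Suc[OF b] by simp
    have "b * s b n j + y \<in> nat_monoid_gen (range (s b n))"
      using gen_mult[of "s b n j" "range (s b n)" y b] add.hyps(2) by simp
    moreover have "a + y - (b - 1) = b * s b n j + y" using as by simp
    ultimately show ?thesis using as by simp
  qed
qed

theorem mainTheorem7:
  fixes b n x :: nat
  assumes "b \<ge> 2" and "x \<in> T b n" and "\<not> (s b n 0 dvd x)"
  shows "x \<ge> b - 1 \<and> x - (b - 1) \<in> T b n"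
  using main_aux[OF assms(1), of x n] assms(2,3) unfolding T_def by auto

end
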